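(* Let $P_\infty=u_1,u_2,\dots$ be the one-way infinite path, with initial configuration $c_0(u_1)=1$ and $c_0(u_i)=2$ for $i\geq2$ (each vertex gets as many chips as its degree). Then for every $k\geq0$: the sequence $(c_{2k}(u_i))_{i\geq1}$ is the word consisting of $k$ copies of the block $1,3$, followed by $1$, followed by $2,2,2,\dots$; and the sequence $(c_{2k+1}(u_i))_{i\ge1}$ is $2$, followed by $k$ copies of the block $1,3$, followed by $1$, followed by $2,2,2,\dots$.
   Context: Diffusion process: for a configuration $c_t$, $c_{t+1}(w)=c_t(w)-|\{x\in N(w): c_t(w)>c_t(x)\}|+|\{x\in N(w): c_t(w)<c_t(x)\}|$ for all vertices $w$ simultaneously (every vertex sends one chip to each neighbour with strictly fewer chips). *)

theory Defs
  imports Main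
begin

definition diffusion_step :: "('v \<Rightarrow> 'v set) \<Rightarrow> ('v \<Rightarrow> int) \<Rightarrow> ('v \<Rightarrow> int)" where
  "diffusion_step N c = (\<lambda>w. c w - int (card {x \<in> N w. c w > c x})
                                 + int (card {x \<in> N w. c w < c x}))"

definition diffusion :: "('v \<Rightarrow> 'v set) \<Rightarrow> ('v \<Rightarrow> int) \<Rightarrow> nat \<Rightarrow> ('v \<Rightarrow> int)" where
  "diffusion N c0 t = (diffusion_step N ^^ t) c0"

text \<open>The one-way infinite path u_1,u_2,...; vertex u_(i+1) is represented by the
natural number i, so the neighbours of i are i-1 (if i>0) and i+1.\<close>
definition path_nbrs :: "nat \<Rightarrow> nat set" where
  "path_nbrs i = {j. j = i + 1 \<or> i = j + 1}"

definition path_c0 :: "nat \<Rightarrow> int" where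
  "path_c0 i = (if i = 0 then 1 else 2)"

definition word_then_twos :: "int list \<Rightarrow> nat \<Rightarrow> int" where
  "word_then_twos xs i = (if i < length xs then xs ! i else 2)"

end

theory Submission
  imports Defs
begin

definition E :: "nat \<Rightarrow> nat \<Rightarrow> int" where
  "E k i = (if i < 2*k+1 then (if even i then 1 else 3) else 2)"
definition Od :: "nat \<Rightarrow> nat \<Rightarrow> int" where
  "Od k i = (if i = 0 then 2 else if i < 2*k+2 then (if odd i then 1 else 3) else 2)"

definition sg :: "int \<Rightarrow> int \<Rightarrow> int" where
  "sg a b = (if a < b then 1 else if b < a then -1 else 0)"

lemma nb0: "path_nbrs 0 = {1}" by (auto simp: path_nbrs_def)
lemma nbS: "path_nbrs (Suc i) = {i, Suc (Suc i)}" by (auto simp: path_nbrs_def)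

lemma card2: "a \<noteq> b \<Longrightarrow> int (card {x \<in> {a,b}. P x}) = (if P a then 1 else 0) + (if P b then 1 else 0)"
proof -
  assume ab: "a \<noteq> b"
  have "{x \<in> {a,b}. P x} = (if P a then {a} else {}) \<union> (if P b then {b} else {})" by auto
  then show ?thesis using ab by auto
qed

lemma card1: "int (card {x \<in> {a}. P x}) = (if P a then 1 else 0)"
  by (auto simp: Collect_conv_if)

lemma step0: "diffusion_step path_nbrs c 0 = c 0 + sg (c 0) (c 1)"
  unfolding diffusion_step_def nb0 card1 sg_def by auto

lemma stepS: "diffusion_step path_nbrs c (Suc i) = c (Suc i) + sg (c (Suc i)) (c i) + sg (c (Suc i)) (c (Suc (Suc i)))"
proof -
  have d: "i \<noteq> Suc (Suc i)" by simp
  show ?thesis unfolding diffusion_step_def nbS card2[OF d] sg_def by auto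
qed

lemma EO: "diffusion_step path_nbrs (E k) = Od k"
proof
  fix i show "diffusion_step path_nbrs (E k) i = Od k i"
    by (cases i) (auto simp: step0 stepS E_def Od_def sg_def)
qed

lemma OE: "diffusion_step path_nbrs (Od k) = E (Suc k)"
proof
  fix i show "diffusion_step path_nbrs (Od k) i = E (Suc k) i"
  proof (cases i)
    case 0 then show ?thesis by (auto simp: step0 E_def Od_def sg_def)
  next
    case (Suc j) then show ?thesis by (cases j) (auto simp: stepS E_def Od_def sg_def)
  qed
qed

lemma E0: "E 0 = path_c0" by (auto simp: E_def path_c0_def)

lemma diffE: "diffusion path_nbrs path_c0 (2*k) = E k \<and> diffusion path_nbrs path_c0 (2*k+1) = Od k"
proof (induction k)
  case 0 then show ?case by (simp add: diffusion_def E0[symmetric] EO)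
next
  case (Suc k)
  have a: "diffusion path_nbrs path_c0 (2*Suc k) = E (Suc k)"
    using Suc by (simp add: diffusion_def OE EO)
  then show ?case by (simp add: diffusion_def EO)
qed

lemma wtt2: "word_then_twos (a # b # xs) (Suc (Suc j)) = word_then_twos xs j"
  by (simp add: word_then_twos_def)

lemma wE: "word_then_twos (concat (replicate k [1, 3]) @ [1]) i = E k i"
proof (induction k arbitrary: i)
  case 0 then show ?case by (auto simp: word_then_twos_def E_def)
next
  case (Suc k)
  show ?case
  proof (cases i)
    case 0 then show ?thesis by (simp add: word_then_twos_def E_def)
  next
    case (Suc j) note j = this
    show ?thesis
    proof (cases j)
      case 0 then show ?thesis using j by (simp add: word_then_twos_def E_def)
    next
      case (Suc m)
      have "word_then_twos (concat (replicate (Suc k) [1, 3]) @ [1]) i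
          = word_then_twos (concat (replicate k [1, 3]) @ [1]) m"
        using j Suc by (simp add: wtt2)
      also have "\<dots> = E k m" by (rule Suc.IH)
      also have "\<dots> = E (Suc k) i" using j Suc by (simp add: E_def)
      finally show ?thesis .
    qed
  qed
qed

lemma wO: "word_then_twos ([2] @ concat (replicate k [1, 3]) @ [1]) i = Od k i"
proof (cases i)
  case 0 then show ?thesis by (simp add: word_then_twos_def Od_def)
next
  case (Suc j)
  have "word_then_twos ([2] @ concat (replicate k [1, 3]) @ [1]) i
      = word_then_twos (concat (replicate k [1, 3]) @ [1]) j"
    using Suc by (simp add: word_then_twos_def)
  also have "\<dots> = E k j" by (rule wE)
  also have "\<dots> = Od k i" using Suc by (auto simp: E_def Od_def)
  finally show ?thesis .
qed

theorem lemma15: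
  fixes k :: nat
  shows "diffusion path_nbrs path_c0 (2 * k)
           = word_then_twos (concat (replicate k [1, 3]) @ [1])
       \<and> diffusion path_nbrs path_c0 (2 * k + 1)
           = word_then_twos ([2] @ concat (replicate k [1, 3]) @ [1])"
  using diffE[of k] wE[of k] wO[of k] by auto

end
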